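(* Suppose $f$ satisfies Assumption 1, $u_c$ satisfies Assumption 2, and $U:\mathbb{R}^n\times[0,\infty)\to\mathbb{R}^m$ is StL. Then $\bar F^E_U$ is EPC with $\bar F^e_U$, where $\bar F^E_U(x,T):=x+Tf(x,U(x,T))$ and $\bar F^e_U(x,T):=F^e(x,U(x,T),T)$.
   Context: Assumption 1: $f(0,0)=0$ and for every $M,M_u\ge0$ there is $L>0$ with $|f(x,u)-f(y,v)|\le L(|x-y|+|u-v|)$ for $|x|,|y|\le M$, $|u|,|v|\le M_u$. Assumption 2: $u_c(0)=0$ and for every $M\ge0$ there is $L>0$ with $|u_c(x)-u_c(y)|\le L|x-y|$ for $|x|,|y|\le M$. $F^e(x,u,T)$: time-$T$ value of the solution of $\dot z=f(z,u)$ with constant $u$ and $z(0)=x$. StL: for each $M\ge0$ there exist $K(M)>0$, $T^*(M)>0$ ($T^*$ nonincreasing) with $U(0,T)=0$ and $|U(x,T)-U(y,T)|\le K|x-y|$ for $|x|,|y|\le M$, $T\in[0,T^* )$. EPC: $\bar F^a$ is EPC with $\bar F^b$ if for each $M\ge0$ there exist $K(M)>0$, $T^*(M)>0$, $\rho\in\mathcal{K}_\infty$ with $|\bar F^a(x,T)-\bar F^b(y,T)|\le(1+KT)|x-y|+T\rho(T)\max\{|x|,|y|\}$ for all $|x|,|y|\le M$, $T\in(0,T^* )$. *)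

theory Defs
  imports "HOL-Analysis.Analysis"
begin

definition assumption1 :: "(real^'n \<Rightarrow> real^'m \<Rightarrow> real^'n) \<Rightarrow> bool" where
  "assumption1 f \<longleftrightarrow> f 0 0 = 0 \<and>
     (\<forall>M Mu. M \<ge> 0 \<and> Mu \<ge> 0 \<longrightarrow> (\<exists>L>0. \<forall>x y u v.
        norm x \<le> M \<and> norm y \<le> M \<and> norm u \<le> Mu \<and> norm v \<le> Mu \<longrightarrow>
        norm (f x u - f y v) \<le> L * (norm (x - y) + norm (u - v))))"

definition assumption2 :: "(real^'n \<Rightarrow> real^'m) \<Rightarrow> bool" where
  "assumption2 uc \<longleftrightarrow> uc 0 = 0 \<and>
     (\<forall>M\<ge>0. \<exists>L>0. \<forall>x y. norm x \<le> M \<and> norm y \<le> M \<longrightarrow>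
        norm (uc x - uc y) \<le> L * norm (x - y))"

definition Fe :: "(real^'n \<Rightarrow> real^'m \<Rightarrow> real^'n) \<Rightarrow> real^'n \<Rightarrow> real^'m \<Rightarrow> real \<Rightarrow> real^'n" where
  "Fe f x u T = (THE w. \<exists>z. z 0 = x \<and>
      (\<forall>t\<in>{0..T}. (z has_vector_derivative f (z t) u) (at t within {0..T})) \<and> z T = w)"

definition StL :: "(real^'n \<Rightarrow> real \<Rightarrow> real^'m) \<Rightarrow> bool" where
  "StL U \<longleftrightarrow> (\<exists>K Ts :: real \<Rightarrow> real.
     (\<forall>M\<ge>0. K M > 0 \<and> Ts M > 0) \<and> antimono_on {0..} Ts \<and>
     (\<forall>M\<ge>0. \<forall>T. 0 \<le> T \<and> T < Ts M \<longrightarrow> U 0 T = 0 \<and>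
        (\<forall>x y. norm x \<le> M \<and> norm y \<le> M \<longrightarrow> norm (U x T - U y T) \<le> K M * norm (x - y))))"

definition class_Kinf :: "(real \<Rightarrow> real) \<Rightarrow> bool" where
  "class_Kinf \<rho> \<longleftrightarrow> continuous_on {0..} \<rho> \<and> strict_mono_on {0..} \<rho> \<and> \<rho> 0 = 0 \<and>
     filterlim \<rho> at_top at_top"

definition EPC :: "(real^'n \<Rightarrow> real \<Rightarrow> real^'n) \<Rightarrow> (real^'n \<Rightarrow> real \<Rightarrow> real^'n) \<Rightarrow> bool" where
  "EPC Fa Fb \<longleftrightarrow> (\<forall>M\<ge>0. \<exists>K>0. \<exists>Ts>0. \<exists>\<rho>. class_Kinf \<rho> \<and>
     (\<forall>x y T. norm x \<le> M \<and> norm y \<le> M \<and> 0 < T \<and> T < Ts \<longrightarrow>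
        norm (Fa x T - Fb y T) \<le> (1 + K * T) * norm (x - y) + T * \<rho> T * max (norm x) (norm y)))"

end

theory Submission
  imports Defs
begin

lemma ode_exists:
  fixes h :: "'a::euclidean_space \<Rightarrow> 'a"
  assumes lip: "\<And>a b. a \<in> cball y r \<Longrightarrow> b \<in> cball y r \<Longrightarrow> norm (h a - h b) \<le> L * norm (a - b)"
    and bnd: "\<And>a. a \<in> cball y r \<Longrightarrow> norm (h a) \<le> B"
    and BT: "B * T \<le> r" and LT: "L * T < 1" and L: "0 \<le> L" and T: "0 < T" and r: "0 \<le> r"
  shows "\<exists>z. z 0 = y \<and> (\<forall>t\<in>{0..T}. (z has_vector_derivative h (z t)) (at t within {0..T}))
     \<and> (\<forall>t\<in>{0..T}. z t \<in> cball y r) \<and> (\<forall>t\<in>{0..T}. z t = y + integral {0..t} (\<lambda>s. h (z s)))"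
proof -
  define p where "p = closest_point (cball y r)"
  have ne: "cball y r \<noteq> {}" using r by simp
  have pin: "p w \<in> cball y r" for w
    unfolding p_def by (rule closest_point_in_set[OF closed_cball ne])
  have plip: "dist (p a) (p b) \<le> dist a b" for a b
    unfolding p_def by (rule closest_point_lipschitz[OF convex_cball closed_cball ne])
  have pid: "a \<in> cball y r \<Longrightarrow> p a = a" for a
    unfolding p_def by (rule closest_point_self)
  define g where "g = (\<lambda>w. h (p w))"
  have glip: "norm (g a - g b) \<le> L * norm (a - b)" for a b
  proof -
    have "norm (g a - g b) \<le> L * norm (p a - p b)" unfolding g_def by (rule lip[OF pin pin])
    also have "\<dots> \<le> L * norm (a - b)" using plip[of a b] L by (simp add: dist_norm mult_left_mono)
    finally show ?thesis .
  qed
  have gb: "norm (g a) \<le> B" for a unfolding g_def by (rule bnd[OF pin])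
  have B0: "0 \<le> B" using gb[of y] norm_ge_zero order_trans by blast
  have gcont: "continuous_on S g" for S
  proof (rule lipschitz_on_continuous_on)
    show "L-lipschitz_on S g" using glip L by (intro lipschitz_onI) (auto simp: dist_norm)
  qed
  define cl where "cl = (\<lambda>t::real. max 0 (min T t))"
  have cl01: "cl t \<in> {0..T}" for t using T by (auto simp: cl_def)
  have clid: "t \<in> {0..T} \<Longrightarrow> cl t = t" for t by (auto simp: cl_def)
  have clcont: "continuous_on UNIV cl" unfolding cl_def by (intro continuous_intros)
  define F where "F = (\<lambda>z::real \<Rightarrow> 'a. \<lambda>t. y + integral {0..cl t} (\<lambda>s. g (z s)))"
  have intbnd: "norm (integral {0..c} (\<lambda>s. g (z s))) \<le> B * c" if "c \<in> {0..T}" "continuous_on UNIV z" for z c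
  proof -
    have "norm (integral {0..c} (\<lambda>s. g (z s))) \<le> B * (c - 0)"
      using that by (intro integral_bound) (auto intro!: continuous_on_compose2[OF gcont] continuous_on_subset[OF that(2)] gb)
    then show ?thesis by simp
  qed
  have Fin: "F z \<in> bcontfun" if zc: "continuous_on UNIV z" for z
  proof (rule bcontfun_normI)
    have gz: "continuous_on {0..T} (\<lambda>s. g (z s))"
      by (rule continuous_on_compose2[OF gcont continuous_on_subset[OF zc]]) auto
    have "continuous_on {0..T} (\<lambda>c. integral {0..c} (\<lambda>s. g (z s)))"
      unfolding continuous_on_eq_continuous_within
      using integral_has_vector_derivative[OF gz] has_vector_derivative_continuous by blast
    then have "continuous_on UNIV (\<lambda>t. integral {0..cl t} (\<lambda>s. g (z s)))"
      by (rule continuous_on_compose2[OF _ clcont]) (use cl01 in auto)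
    then show "continuous_on UNIV (F z)" unfolding F_def by (intro continuous_intros)
    show "norm (F z t) \<le> norm y + B * T" for t
    proof -
      have "norm (F z t) \<le> norm y + norm (integral {0..cl t} (\<lambda>s. g (z s)))"
        unfolding F_def by (rule norm_triangle_ineq)
      also have "\<dots> \<le> norm y + B * T"
        using intbnd[OF cl01 zc, of t] cl01[of t] B0 mult_left_mono[of "cl t" T B] by auto
      finally show ?thesis .
    qed
  qed
  define P where "P = (\<lambda>z::real \<Rightarrow>\<^sub>C 'a. Bcontfun (F (apply_bcontfun z)))"
  have P_apply: "apply_bcontfun (P z) = F (apply_bcontfun z)" for z
    unfolding P_def by (rule Bcontfun_inverse[OF Fin]) simp
  have contr: "dist (P z1) (P z2) \<le> (L * T) * dist z1 z2" for z1 z2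
  proof (rule dist_bound)
    fix t
    let ?c = "cl t"
    have c1: "continuous_on {0..?c} (\<lambda>s. g (apply_bcontfun z1 s))" 
      by (rule continuous_on_compose2[OF gcont]) auto
    have c2: "continuous_on {0..?c} (\<lambda>s. g (apply_bcontfun z2 s))" 
      by (rule continuous_on_compose2[OF gcont]) auto
    have "dist (P z1 t) (P z2 t) = norm (integral {0..?c} (\<lambda>s. g (z1 s)) - integral {0..?c} (\<lambda>s. g (z2 s)))"
      by (simp add: P_apply F_def dist_norm)
    also have "\<dots> = norm (integral {0..?c} (\<lambda>s. g (z1 s) - g (z2 s)))"
      using integral_diff[OF integrable_continuous_real[OF c1] integrable_continuous_real[OF c2]] by simp
    also have "\<dots> \<le> (L * dist z1 z2) * (?c - 0)"
    proof (rule integral_bound)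
      show "0 \<le> ?c" using cl01[of t] by simp
      show "continuous_on {0..?c} (\<lambda>s. g (z1 s) - g (z2 s))" using c1 c2 by (intro continuous_intros)
      fix s
      have "norm (g (z1 s) - g (z2 s)) \<le> L * norm (z1 s - z2 s)" by (rule glip)
      also have "\<dots> \<le> L * dist z1 z2" using dist_bounded[of z1 s z2] L by (simp add: dist_norm mult_left_mono)
      finally show "norm (g (z1 s) - g (z2 s)) \<le> L * dist z1 z2" .
    qed
    also have "\<dots> \<le> (L * T) * dist z1 z2"
    proof -
      have "dist z1 z2 * cl t \<le> dist z1 z2 * T" using cl01[of t] by (intro mult_left_mono) auto
      then have "L * (dist z1 z2 * cl t) \<le> L * (dist z1 z2 * T)" using L by (rule mult_left_mono)
      then show ?thesis by (simp add: algebra_simps)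
    qed
    finally show "dist (P z1 t) (P z2 t) \<le> (L * T) * dist z1 z2" .
  qed
  obtain z0 where z0: "P z0 = z0"
    using banach_fix_type[of "L*T" P] contr L T LT by auto
  define z where "z = apply_bcontfun z0"
  have zF: "z t = F z t" for t using z0 P_apply z_def by metis
  have zc: "continuous_on UNIV z" unfolding z_def by simp
  have zint: "z t = y + integral {0..t} (\<lambda>s. g (z s))" if "t \<in> {0..T}" for t
    using zF[of t] clid[OF that] by (simp add: F_def)
  have zball: "z t \<in> cball y r" if "t \<in> {0..T}" for t
  proof -
    have "dist y (z t) = norm (integral {0..t} (\<lambda>s. g (z s)))" using zint[OF that] by (simp add: dist_norm)
    also have "\<dots> \<le> B * t" by (rule intbnd[OF that zc])
    also have "\<dots> \<le> B * T" using that B0 by (simp add: mult_left_mono)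
    finally show ?thesis using BT by simp
  qed
  have gz: "t \<in> {0..T} \<Longrightarrow> g (z t) = h (z t)" for t using pid[OF zball] g_def by simp
  have eqint: "integral {0..t} (\<lambda>s. g (z s)) = integral {0..t} (\<lambda>s. h (z s))" if "t \<in> {0..T}" for t
    by (rule integral_cong) (use that gz in auto)
  show ?thesis
  proof (intro exI conjI ballI)
    show "z 0 = y" using zint[of 0] T by simp
    fix t assume t: "t \<in> {0..T}"
    show "z t \<in> cball y r" by (rule zball[OF t])
    show "z t = y + integral {0..t} (\<lambda>s. h (z s))" using zint[OF t] eqint[OF t] by simp
    have gzc: "continuous_on {0..T} (\<lambda>s. g (z s))"
      by (rule continuous_on_compose2[OF gcont continuous_on_subset[OF zc]]) auto
    have "((\<lambda>u. y + integral {0..u} (\<lambda>s. g (z s))) has_vector_derivative g (z t)) (at t within {0..T})"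
      using integral_has_vector_derivative[OF gzc t] by (intro derivative_eq_intros) auto
    then have "(z has_vector_derivative g (z t)) (at t within {0..T})"
      by (rule has_vector_derivative_transform[OF t, rotated]) (simp add: zint)
    then show "(z has_vector_derivative h (z t)) (at t within {0..T})" using gz[OF t] by simp
  qed
qed


lemma ode_unique:
  fixes h :: "'a::euclidean_space \<Rightarrow> 'a"
  assumes loclip: "\<And>M. \<exists>L. \<forall>a b. norm a \<le> M \<and> norm b \<le> M \<longrightarrow> norm (h a - h b) \<le> L * norm (a - b)"
    and z: "\<forall>t\<in>{0..T}. (z has_vector_derivative h (z t)) (at t within {0..T})"
    and w: "\<forall>t\<in>{0..T}. (w has_vector_derivative h (w t)) (at t within {0..T})"
    and zw0: "z 0 = w 0" and T: "0 \<le> T"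
  shows "z T = w T"
proof -
  have zc: "continuous_on {0..T} z"
    unfolding continuous_on_eq_continuous_within using z has_vector_derivative_continuous by blast
  have wc: "continuous_on {0..T} w"
    unfolding continuous_on_eq_continuous_within using w has_vector_derivative_continuous by blast
  obtain Mz where Mz: "\<And>t. t \<in> {0..T} \<Longrightarrow> norm (z t) \<le> Mz"
    using compact_imp_bounded[OF compact_continuous_image[OF zc compact_Icc]] unfolding bounded_iff by (metis image_eqI)
  obtain Mw where Mw: "\<And>t. t \<in> {0..T} \<Longrightarrow> norm (w t) \<le> Mw"
    using compact_imp_bounded[OF compact_continuous_image[OF wc compact_Icc]] unfolding bounded_iff by (metis image_eqI)
  obtain L0 where L0: "\<And>a b. norm a \<le> max Mz Mw \<Longrightarrow> norm b \<le> max Mz Mw \<Longrightarrow> norm (h a - h b) \<le> L0 * norm (a - b)"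
    using loclip[of "max Mz Mw"] by blast
  define L where "L = \<bar>L0\<bar>"
  have L: "0 \<le> L" by (simp add: L_def)
  have lipzw: "norm (h (z t) - h (w t)) \<le> L * norm (z t - w t)" if "t \<in> {0..T}" for t
  proof -
    have "norm (h (z t) - h (w t)) \<le> L0 * norm (z t - w t)"
      using L0 Mz[OF that] Mw[OF that] by (meson max.cobounded1 max.cobounded2 order_trans)
    also have "\<dots> \<le> L * norm (z t - w t)" unfolding L_def by (intro mult_right_mono) auto
    finally show ?thesis .
  qed
  define D where "D = (\<lambda>t. z t - w t)"
  define \<phi> where "\<phi> = (\<lambda>t. exp (- (2 * L) * t) * (D t \<bullet> D t))"
  have "\<phi> T \<le> \<phi> 0"
  proof (rule DERIV_nonpos_imp_decreasing_open[OF T])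
    show "continuous_on {0..T} \<phi>" unfolding \<phi>_def D_def using zc wc by (intro continuous_intros)
    fix t assume t: "0 < t" "t < T"
    then have tT: "t \<in> {0..T}" by auto
    have atw: "at t within {0..T} = at t" using t by (rule at_within_Icc_at)
    have dz: "(z has_derivative (\<lambda>x. x *\<^sub>R h (z t))) (at t)"
      using z tT unfolding atw[symmetric] has_vector_derivative_def by blast
    have dw: "(w has_derivative (\<lambda>x. x *\<^sub>R h (w t))) (at t)"
      using w tT unfolding atw[symmetric] has_vector_derivative_def by blast
    let ?d = "exp (- (2 * L) * t) * (- (2 * L) * (D t \<bullet> D t) + 2 * (D t \<bullet> (h (z t) - h (w t))))"
    have "(\<phi> has_real_derivative ?d) (at t)"
      unfolding \<phi>_def D_def has_field_derivative_def
      by (rule derivative_eq_intros dz dw refl | simp)+ (rule ext, simp add: algebra_simps inner_diff_left inner_diff_right inner_commute)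
    moreover have "?d \<le> 0"
    proof -
      have "D t \<bullet> (h (z t) - h (w t)) \<le> norm (D t) * norm (h (z t) - h (w t))"
        by (rule Cauchy_Schwarz_ineq2[THEN order_trans[OF abs_ge_self]])
      also have "\<dots> \<le> norm (D t) * (L * norm (D t))"
        using lipzw[OF tT] unfolding D_def by (intro mult_left_mono) auto
      also have "\<dots> = L * (D t \<bullet> D t)" by (simp add: power2_norm_eq_inner[symmetric] power2_eq_square)
      finally have "- (2 * L) * (D t \<bullet> D t) + 2 * (D t \<bullet> (h (z t) - h (w t))) \<le> 0" by simp
      then show ?thesis by (simp add: mult_nonneg_nonpos)
    qed
    ultimately show "\<exists>y. DERIV \<phi> t :> y \<and> y \<le> 0" by blast
  qed
  moreover have "\<phi> 0 = 0" using zw0 by (simp add: \<phi>_def D_def)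
  ultimately have "D T \<bullet> D T \<le> 0" unfolding \<phi>_def by (simp add: mult_le_0_iff)
  then have "D T = 0" by (metis inner_eq_zero_iff inner_ge_zero order_antisym)
  then show ?thesis by (simp add: D_def)
qed


theorem lemma2:
  fixes f :: "real^'n \<Rightarrow> real^'m \<Rightarrow> real^'n"
    and uc :: "real^'n \<Rightarrow> real^'m"
    and U :: "real^'n \<Rightarrow> real \<Rightarrow> real^'m"
  assumes "assumption1 f" and "assumption2 uc" and "StL U"
  shows "EPC (\<lambda>x T. x + T *\<^sub>R f x (U x T)) (\<lambda>x T. Fe f x (U x T) T)"
proof -
  have A1: "f 0 0 = 0 \<and> (\<forall>M Mu. M \<ge> 0 \<and> Mu \<ge> 0 \<longrightarrow> (\<exists>L>0. \<forall>x y u v.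
        norm x \<le> M \<and> norm y \<le> M \<and> norm u \<le> Mu \<and> norm v \<le> Mu \<longrightarrow>
        norm (f x u - f y v) \<le> L * (norm (x - y) + norm (u - v))))"
    using assms(1) unfolding assumption1_def .
  have f00: "f 0 0 = 0" using A1 by (rule conjunct1)
  have flip: "\<And>M Mu. M \<ge> 0 \<Longrightarrow> Mu \<ge> 0 \<Longrightarrow> \<exists>L>0. \<forall>x y u v.
        norm x \<le> M \<and> norm y \<le> M \<and> norm u \<le> Mu \<and> norm v \<le> Mu \<longrightarrow>
        norm (f x u - f y v) \<le> L * (norm (x - y) + norm (u - v))"
    using conjunct2[OF A1] by simp
  obtain K Ts :: "real \<Rightarrow> real" where KT0: "\<forall>M\<ge>0. K M > 0 \<and> Ts M > 0"
    and UL0: "\<forall>M\<ge>0. \<forall>T. 0 \<le> T \<and> T < Ts M \<longrightarrow> U 0 T = 0 \<and>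
        (\<forall>x y. norm x \<le> M \<and> norm y \<le> M \<longrightarrow> norm (U x T - U y T) \<le> K M * norm (x - y))"
    using assms(3) unfolding StL_def by (elim exE conjE) 
  have KT: "\<And>M. M \<ge> 0 \<Longrightarrow> K M > 0 \<and> Ts M > 0" using KT0 by simp
  have UL: "\<And>M T. M \<ge> 0 \<Longrightarrow> 0 \<le> T \<Longrightarrow> T < Ts M \<Longrightarrow> U 0 T = 0 \<and>
        (\<forall>x y. norm x \<le> M \<and> norm y \<le> M \<longrightarrow> norm (U x T - U y T) \<le> K M * norm (x - y))"
    using UL0 by simp
  have Fe_eq: "Fe f y u T = z T" if z0: "z 0 = y"
    and zd: "\<forall>t\<in>{0..T}. (z has_vector_derivative f (z t) u) (at t within {0..T})" and T: "0 \<le> T"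
    for y u T and z :: "real \<Rightarrow> real^'n"
  proof -
    have loclip: "\<exists>L. \<forall>a b. norm a \<le> M \<and> norm b \<le> M \<longrightarrow> norm (f a u - f b u) \<le> L * norm (a - b)" for M
    proof -
      obtain L where L: "\<forall>x y v w. norm x \<le> max M 0 \<and> norm y \<le> max M 0 \<and> norm v \<le> norm u \<and> norm w \<le> norm u \<longrightarrow>
        norm (f x v - f y w) \<le> L * (norm (x - y) + norm (v - w))"
        using flip[of "max M 0" "norm u"] by auto
      show ?thesis
      proof (intro exI allI impI)
        fix a b :: "real^'n" assume ab: "norm a \<le> M \<and> norm b \<le> M"
        have "norm (f a u - f b u) \<le> L * (norm (a - b) + norm (u - u))"
          using L ab by (meson max.coboundedI1 order_refl)
        then show "norm (f a u - f b u) \<le> L * norm (a - b)" by simp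
      qed
    qed
    show ?thesis unfolding Fe_def
    proof (rule the_equality)
      show "\<exists>z'. z' 0 = y \<and> (\<forall>t\<in>{0..T}. (z' has_vector_derivative f (z' t) u) (at t within {0..T})) \<and> z' T = z T"
        using z0 zd by blast
      fix v assume "\<exists>z'. z' 0 = y \<and> (\<forall>t\<in>{0..T}. (z' has_vector_derivative f (z' t) u) (at t within {0..T})) \<and> z' T = v"
      then obtain w where w: "w 0 = y" "\<forall>t\<in>{0..T}. (w has_vector_derivative f (w t) u) (at t within {0..T})" "w T = v"
        by blast
      have "w T = z T"
        by (rule ode_unique[where h="\<lambda>a. f a u", OF loclip w(2) zd _ T]) (simp add: w(1) z0)
      then show "v = z T" using w(3) by simp
    qed
  qed
  show ?thesis unfolding EPC_def
  proof (intro allI impI)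
    fix M :: real assume M: "0 \<le> M"
    define KM where "KM = K M"
    define TM where "TM = Ts M"
    have KM: "KM > 0" and TM: "TM > 0" using KT[OF M] by (auto simp: KM_def TM_def)
    define Mu where "Mu = KM * M"
    have Mu: "Mu \<ge> 0" using KM M by (simp add: Mu_def)
    obtain L where L: "L > 0" and Lf: "\<And>x y u v. norm x \<le> 2*M \<Longrightarrow> norm y \<le> 2*M \<Longrightarrow> norm u \<le> Mu \<Longrightarrow> norm v \<le> Mu \<Longrightarrow>
        norm (f x u - f y v) \<le> L * (norm (x - y) + norm (u - v))"
      using flip[of "2*M" Mu] M Mu by auto
    define Ke where "Ke = L * (1 + KM)"
    define T0 where "T0 = min TM (1 / (2 * L * (1 + KM)))"
    define \<rho> where "\<rho> = (\<lambda>T::real. (2 * L^2 * (1 + KM)) * T)"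
    have c0: "2 * L^2 * (1 + KM) > 0" using L KM by simp
    have Ke0: "Ke > 0" using L KM by (simp add: Ke_def)
    have T00: "T0 > 0" using TM L KM by (simp add: T0_def)
    have Kinf: "class_Kinf \<rho>"
      unfolding class_Kinf_def
    proof (intro conjI)
      show "continuous_on {0..} \<rho>" unfolding \<rho>_def by (intro continuous_intros)
      show "strict_mono_on {0..} \<rho>" unfolding \<rho>_def using c0 KM L by (auto simp: strict_mono_on_def intro!: mult_strict_left_mono)
      show "\<rho> 0 = 0" by (simp add: \<rho>_def)
      show "filterlim \<rho> at_top at_top" unfolding \<rho>_def
        by (rule filterlim_tendsto_pos_mult_at_top[OF tendsto_const c0 filterlim_ident])
    qed
    show "\<exists>K>0. \<exists>Ts>0. \<exists>\<rho>. class_Kinf \<rho> \<and>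
     (\<forall>x y T. norm x \<le> M \<and> norm y \<le> M \<and> 0 < T \<and> T < Ts \<longrightarrow>
        norm (x + T *\<^sub>R f x (U x T) - Fe f y (U y T) T) \<le> (1 + K * T) * norm (x - y) + T * \<rho> T * max (norm x) (norm y))"
    proof (intro exI conjI allI impI)
      show "Ke > 0" "T0 > 0" "class_Kinf \<rho>" by (fact Ke0 T00 Kinf)+
      fix x y :: "real^'n" and T :: real
      assume H: "norm x \<le> M \<and> norm y \<le> M \<and> 0 < T \<and> T < T0"
      then have x: "norm x \<le> M" and y: "norm y \<le> M" and T: "0 < T" and TT0: "T < T0" by auto
      have TTM: "T < TM" using TT0 by (simp add: T0_def)
      have TL: "T * (L * (1 + KM)) \<le> 1/2"
      proof -
        have "T < 1 / (2 * L * (1 + KM))" using TT0 by (simp add: T0_def)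
        moreover have "2 * L * (1 + KM) > 0" using L KM by simp
        ultimately have "T * (2 * L * (1 + KM)) < 1" using pos_less_divide_eq by blast
        then show ?thesis by simp
      qed
      have TL2: "T * L \<le> 1/2"
      proof -
        have "T * L \<le> T * (L * (1 + KM))" using T L KM by (simp add: mult_left_mono)
        then show ?thesis using TL by simp
      qed
      have ULT: "U 0 T = 0" and ULip: "\<And>a b. norm a \<le> M \<Longrightarrow> norm b \<le> M \<Longrightarrow> norm (U a T - U b T) \<le> KM * norm (a - b)"
        using UL[OF M _ TTM[unfolded TM_def]] T by (auto simp: KM_def)
      define ux where "ux = U x T"
      define uy where "uy = U y T"
      have uxb: "norm ux \<le> KM * norm x" using ULip[OF x, of 0] M ULT by (simp add: ux_def)
      have uyb: "norm uy \<le> KM * norm y" using ULip[OF y, of 0] M ULT by (simp add: uy_def)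
      have uxM: "norm ux \<le> Mu" using uxb mult_left_mono[OF x, of KM] KM unfolding Mu_def by linarith
      have uyM: "norm uy \<le> Mu" using uyb mult_left_mono[OF y, of KM] KM unfolding Mu_def by linarith
      have uxy: "norm (ux - uy) \<le> KM * norm (x - y)" using ULip[OF x y] by (simp add: ux_def uy_def)
      define r where "r = 2 * T * L * (1 + KM) * norm y"
      have r0: "0 \<le> r" using T L KM by (simp add: r_def)
      have ry: "r \<le> norm y"
      proof -
        have "r = (2 * (T * (L * (1 + KM)))) * norm y" by (simp add: r_def algebra_simps)
        also have "\<dots> \<le> 1 * norm y" using TL by (intro mult_right_mono) auto
        finally show ?thesis by simp
      qed
      define h where "h = (\<lambda>a. f a uy)"
      have inball: "norm a \<le> 2 * M" if "a \<in> cball y r" for a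
      proof -
        have "norm a \<le> norm y + norm (a - y)" by (rule norm_triangle_sub)
        also have "\<dots> \<le> norm y + r" using that by (simp add: dist_norm norm_minus_commute)
        finally show ?thesis using ry y by simp
      qed
      have hlip: "norm (h a - h b) \<le> L * norm (a - b)" if "a \<in> cball y r" "b \<in> cball y r" for a b
        using Lf[OF inball[OF that(1)] inball[OF that(2)] uyM uyM] by (simp add: h_def)
      define B where "B = L * ((1 + KM) * norm y + r)"
      have hbnd: "norm (h a) \<le> B" if a: "a \<in> cball y r" for a
      proof -
        have "norm (h a) = norm (f a uy - f 0 0)" by (simp add: h_def f00)
        also have "\<dots> \<le> L * (norm a + norm uy)" using Lf[OF inball[OF a], of 0 uy 0] M Mu uyM by simp
        also have "\<dots> \<le> B"
        proof -
          have "norm a \<le> norm y + r"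
          proof -
            have "norm a \<le> norm y + norm (a - y)" by (rule norm_triangle_sub)
            then show ?thesis using a by (simp add: dist_norm norm_minus_commute)
          qed
          then have "norm a + norm uy \<le> (1 + KM) * norm y + r" using uyb distrib_right[of 1 KM "norm y"] by linarith
          then show ?thesis unfolding B_def using L by (intro mult_left_mono) auto
        qed
        finally show ?thesis .
      qed
      have BT: "B * T \<le> r"
      proof -
        have e1: "B * T = (T * (L * (1 + KM))) * norm y + (T * L) * r" by (simp add: B_def algebra_simps)
        have e2: "(T * (L * (1 + KM))) * norm y = r / 2" by (simp add: r_def algebra_simps)
        have e3: "(T * L) * r \<le> (1/2) * r" using TL2 r0 by (rule mult_right_mono)
        show ?thesis using e1 e2 e3 by linarith
      qed
      have LT: "L * T < 1" using TL2 by (simp add: mult.commute)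
      obtain z where z0: "z 0 = y" and zd: "\<forall>t\<in>{0..T}. (z has_vector_derivative h (z t)) (at t within {0..T})"
        and zb: "\<forall>t\<in>{0..T}. z t \<in> cball y r" and zi: "\<forall>t\<in>{0..T}. z t = y + integral {0..t} (\<lambda>s. h (z s))"
        using ode_exists[of y r h L B T, OF hlip hbnd BT LT less_imp_le[OF L] T r0] by blast
      have Fez: "Fe f y uy T = z T" using Fe_eq[where y=y and u=uy and T=T and z=z] z0 zd T by (simp add: h_def)
      have zc: "continuous_on {0..T} z"
        unfolding continuous_on_eq_continuous_within using zd has_vector_derivative_continuous by blast
      have hc: "continuous_on (cball y r) h"
        by (rule lipschitz_on_continuous_on[of L]) (use hlip L in \<open>auto intro!: lipschitz_onI simp: dist_norm\<close>)
      have hzc: "continuous_on {0..T} (\<lambda>s. h (z s))"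
        by (rule continuous_on_compose2[OF hc zc]) (use zb in auto)
      have est2: "norm (z T - y - T *\<^sub>R h y) \<le> (L * r) * T"
      proof -
        have "z T - y - T *\<^sub>R h y = integral {0..T} (\<lambda>s. h (z s)) - integral {0..T} (\<lambda>s. h y)"
        proof -
          have "z T = y + integral {0..T} (\<lambda>s. h (z s))" using bspec[OF zi, of T] T by simp
          then show ?thesis using T by (simp only: integral_const_real content_real) simp
        qed
        also have "\<dots> = integral {0..T} (\<lambda>s. h (z s) - h y)"
          by (rule integral_diff[symmetric]) (use hzc in \<open>auto intro: integrable_continuous_real\<close>)
        finally have "norm (z T - y - T *\<^sub>R h y) = norm (integral {0..T} (\<lambda>s. h (z s) - h y))" by simp
        also have "\<dots> \<le> (L * r) * (T - 0)"
        proof (rule integral_bound)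
          show "0 \<le> T" using T by simp
          show "continuous_on {0..T} (\<lambda>s. h (z s) - h y)" using hzc by (intro continuous_intros)
          fix s assume s: "s \<in> {0..T}"
          have "norm (h (z s) - h y) \<le> L * norm (z s - y)" using hlip[of "z s" y] zb s r0 by simp
          also have "\<dots> \<le> L * r" using zb s L by (intro mult_left_mono) (auto simp: dist_norm norm_minus_commute)
          finally show "norm (h (z s) - h y) \<le> L * r" .
        qed
        finally show ?thesis by simp
      qed
      have est1: "norm (x - y + T *\<^sub>R (f x ux - f y uy)) \<le> (1 + Ke * T) * norm (x - y)"
      proof -
        have "norm (x - y + T *\<^sub>R (f x ux - f y uy)) \<le> norm (x - y) + T * norm (f x ux - f y uy)"
          using norm_triangle_ineq[of "x - y" "T *\<^sub>R (f x ux - f y uy)"] T by simp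
        also have "\<dots> \<le> norm (x - y) + T * (L * (norm (x - y) + norm (ux - uy)))"
          using Lf[of x y ux uy] x y M uxM uyM T by (intro add_left_mono mult_left_mono) auto
        also have "\<dots> \<le> norm (x - y) + T * (L * (norm (x - y) + KM * norm (x - y)))"
          using uxy T L by (intro add_left_mono mult_left_mono) auto
        also have "\<dots> = (1 + Ke * T) * norm (x - y)" by (simp add: Ke_def algebra_simps)
        finally show ?thesis .
      qed
      have "x + T *\<^sub>R f x (U x T) - Fe f y (U y T) T
            = (x - y + T *\<^sub>R (f x ux - f y uy)) - (z T - y - T *\<^sub>R h y)"
        using Fez unfolding ux_def uy_def h_def by (simp add: algebra_simps)
      then have "norm (x + T *\<^sub>R f x (U x T) - Fe f y (U y T) T)
            \<le> norm (x - y + T *\<^sub>R (f x ux - f y uy)) + norm (z T - y - T *\<^sub>R h y)"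
        by (simp only: norm_triangle_ineq4)
      also have "\<dots> \<le> (1 + Ke * T) * norm (x - y) + (L * r) * T" using est1 est2 by simp
      also have "(L * r) * T = T * \<rho> T * norm y" by (simp add: r_def \<rho>_def power2_eq_square algebra_simps)
      also have "\<dots> \<le> T * \<rho> T * max (norm x) (norm y)"
        using T c0 by (intro mult_left_mono) (auto simp: \<rho>_def)
      finally show "norm (x + T *\<^sub>R f x (U x T) - Fe f y (U y T) T) \<le> (1 + Ke * T) * norm (x - y) + T * \<rho> T * max (norm x) (norm y)"
        by simp
    qed
  qed
qed

end
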